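(* Let $M$ be an $\mathfrak{S}$-module, $\mathfrak{S}=\mathbb{Z}[t]/(t^p-1)$, with $\operatorname{im}(1-t)=M$. Then $N(t)=0$ on $M$ and $\ker(1-t)$ is a $\mathbb{Z}/p$-vector space. Let $(e_i)_{i\in I}$ be a basis of $\ker(1-t)$. Then there is an injective $\mathfrak{S}$-module map $\psi\colon\bigoplus_{i\in I}\mathbb{Z}[\vartheta,1/p]/(1-\vartheta)\mathbb{Z}[\vartheta]\to M$ with uniquely $p$-divisible cokernel.
   Context: $p$ is a prime, $N(t)=1+t+\dots+t^{p-1}$, $\vartheta$ is a primitive $p$-th root of unity, so $\mathbb{Z}[\vartheta]\cong\mathbb{Z}[t]/(N(t))$; $t$ acts on $\mathbb{Z}[\vartheta,1/p]/(1-\vartheta)\mathbb{Z}[\vartheta]$ by multiplication with $\vartheta$. Uniquely $p$-divisible means multiplication by $p$ is bijective. *)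

theory Defs
  imports Complex_Main "HOL-Computational_Algebra.Polynomial"
begin

definition theta :: "nat \<Rightarrow> complex" where
  "theta p = cis (2 * pi / real p)"

definition Ztheta :: "nat \<Rightarrow> complex set" where
  "Ztheta p = {poly (map_poly of_int f) (theta p) | f :: int poly. True}"

definition Ztheta_inv_p :: "nat \<Rightarrow> complex set" where
  "Ztheta_inv_p p = {z / of_nat p ^ k | z k. z \<in> Ztheta p}"

definition one_minus_theta_Ztheta :: "nat \<Rightarrow> complex set" where
  "one_minus_theta_Ztheta p = {(1 - theta p) * z | z. z \<in> Ztheta p}"

text \<open>Representatives of the direct sum over I of Z[theta,1/p]:
  finitely supported families with support in I.\<close>
definition dsum_rep :: "nat \<Rightarrow> 'i set \<Rightarrow> ('i \<Rightarrow> complex) set" where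
  "dsum_rep p I = {f. finite {i. f i \<noteq> 0} \<and> (\<forall>i. f i \<noteq> 0 \<longrightarrow> i \<in> I)
                      \<and> (\<forall>i. f i \<in> Ztheta_inv_p p)}"

definition nmul :: "nat \<Rightarrow> 'a::ab_group_add \<Rightarrow> 'a" where
  "nmul n x = (\<Sum>_<n. x)"

text \<open>An S-module, S = Z[t]/(t^p - 1): an abelian group with an additive
  endomorphism T satisfying T^p = id.\<close>
definition S_module :: "nat \<Rightarrow> ('a::ab_group_add \<Rightarrow> 'a) \<Rightarrow> bool" where
  "S_module p T \<longleftrightarrow> (\<forall>x y. T (x + y) = T x + T y) \<and> (T ^^ p = id)"

text \<open>(e_i)_{i in I} is a Z/p-basis of ker(1 - T) (coefficients in Z/p
  represented by 0..p-1).\<close>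
definition is_Zp_basis_of_fix :: "nat \<Rightarrow> ('a::ab_group_add \<Rightarrow> 'a) \<Rightarrow> 'i set \<Rightarrow> ('i \<Rightarrow> 'a) \<Rightarrow> bool" where
  "is_Zp_basis_of_fix p T I e \<longleftrightarrow>
     (\<forall>i\<in>I. T (e i) = e i) \<and>
     (\<forall>x. T x = x \<longrightarrow>
        (\<exists>!c :: 'i \<Rightarrow> nat. (\<forall>i. c i < p) \<and> (\<forall>i. c i \<noteq> 0 \<longrightarrow> i \<in> I) \<and> finite {i. c i \<noteq> 0}
            \<and> x = (\<Sum>i\<in>{i. c i \<noteq> 0}. nmul (c i) (e i))))"

text \<open>The subset A of M (an image of a module map) has uniquely p-divisible
  cokernel M/A: multiplication by p is bijective on M/A.\<close>
definition uniquely_p_divisible_cokernel :: "nat \<Rightarrow> 'a::ab_group_add set \<Rightarrow> bool" where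
  "uniquely_p_divisible_cokernel p A \<longleftrightarrow>
     (\<forall>x. \<exists>y. nmul p y - x \<in> A) \<and> (\<forall>y. nmul p y \<in> A \<longrightarrow> y \<in> A)"

end

theory Submission
  imports Defs "HOL-Computational_Algebra.Computational_Algebra"
begin

lemma eis_aux:
  fixes G H :: "int poly" and q :: int
  assumes pr: "prime q" and dG: "degree G \<ge> 1" and dH: "degree H \<ge> 1"
    and lG: "\<not> q dvd lead_coeff G"
    and cf: "\<forall>k < degree (G*H). q dvd coeff (G*H) k"
    and g0: "q dvd coeff G 0" and h0: "\<not> q dvd coeff H 0"
  shows False
proof -
  define i where "i = (LEAST i. \<not> q dvd coeff G i)"
  have i1: "\<not> q dvd coeff G i" unfolding i_def by (rule LeastI[of _ "degree G"]) (rule lG)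
  have i2: "i \<le> degree G" unfolding i_def by (rule Least_le) (rule lG)
  have i3: "\<And>j. j < i \<Longrightarrow> q dvd coeff G j" unfolding i_def using not_less_Least by blast
  have i0: "i \<noteq> 0" using i1 g0 by (metis)
  have "G \<noteq> 0" "H \<noteq> 0" using dG dH by auto
  then have dGH: "degree (G*H) = degree G + degree H" by (rule degree_mult_eq)
  have "i < degree (G*H)" using dGH i2 dH by linarith
  with cf have A: "q dvd coeff (G*H) i" by blast
  have "coeff (G*H) i = (\<Sum>j\<le>i. coeff G j * coeff H (i-j))" by (rule coeff_mult)
  also have "\<dots> = (\<Sum>j<i. coeff G j * coeff H (i-j)) + coeff G i * coeff H 0"
    by (simp add: lessThan_Suc_atMost[symmetric])
  finally have B: "coeff (G*H) i = (\<Sum>j<i. coeff G j * coeff H (i-j)) + coeff G i * coeff H 0" .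
  have "q dvd (\<Sum>j<i. coeff G j * coeff H (i-j))"
    by (rule dvd_sum) (simp add: i3)
  with A B have "q dvd coeff G i * coeff H 0" by (metis dvd_add_right_iff)
  with pr have "q dvd coeff G i \<or> q dvd coeff H 0" by (simp add: prime_dvd_mult_iff)
  with i1 h0 show False by blast
qed

lemma eisenstein:
  fixes G H :: "int poly" and q :: int
  assumes pr: "prime q" and dG: "degree G \<ge> 1" and dH: "degree H \<ge> 1"
    and lGH: "lead_coeff G * lead_coeff H = 1"
    and cf: "\<forall>k < degree (G*H). q dvd coeff (G*H) k"
    and c0: "\<not> q^2 dvd coeff (G*H) 0"
  shows False
proof -
  have lG: "\<not> q dvd lead_coeff G" and lH: "\<not> q dvd lead_coeff H"
    using lGH pr by (metis dvd_mult2 dvd_mult not_prime_unit dvd_refl)+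
  have e0: "coeff (G*H) 0 = coeff G 0 * coeff H 0" by (simp add: coeff_mult)
  have "q dvd coeff (G*H) 0" using cf dG dH
    by (metis add_is_0 degree_mult_eq degree_0 not_one_le_zero bot_nat_0.not_eq_extremum)
  then have "q dvd coeff G 0 \<or> q dvd coeff H 0" using pr e0 by (simp add: prime_dvd_mult_iff)
  moreover have "\<not> (q dvd coeff G 0 \<and> q dvd coeff H 0)"
    using c0 e0 by (metis mult_dvd_mono power2_eq_square)
  ultimately show False
  proof (elim disjE)
    assume "q dvd coeff G 0"
    then show False using eis_aux[OF pr dG dH lG cf] \<open>\<not> (q dvd coeff G 0 \<and> q dvd coeff H 0)\<close> by blast
  next
    assume "q dvd coeff H 0"
    then show False using eis_aux[OF pr dH dG lH] cf \<open>\<not> (q dvd coeff G 0 \<and> q dvd coeff H 0)\<close>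
      by (metis mult.commute)
  qed
qed


definition Np :: "nat \<Rightarrow> int poly" where "Np p = (\<Sum>k<p. monom 1 k)"

lemma Np_mult: "Np p * [:-1,1:] = monom 1 p - 1"
proof -
  have "Np p * [:-1,1:] = (\<Sum>k<p. monom 1 (Suc k) - monom 1 k)"
    unfolding Np_def sum_distrib_right
  proof (rule sum.cong)
    fix k show "monom (1::int) k * [:- 1, 1:] = monom 1 (Suc k) - monom 1 k"
      by (simp add: monom_Suc algebra_simps monom_0 flip: smult_monom)
  qed simp
  also have "\<dots> = monom 1 p - monom 1 0" by (rule sum_lessThan_telescope)
  finally show ?thesis by (simp add: one_pCons monom_0)
qed


lemma Np_deg_lead:
  assumes "p \<ge> 1"
  shows "degree (Np p) = p - 1" "lead_coeff (Np p) = 1" "Np p \<noteq> 0"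
proof -
  have cp: "coeff (monom (1::int) p - 1) p = 1" using assms by (simp add: coeff_monom)
  have ne: "Np p \<noteq> 0"
  proof
    assume "Np p = 0"
    then have "monom (1::int) p - 1 = 0" using Np_mult[of p] by simp
    with cp show False by simp
  qed
  have d1: "degree (monom (1::int) p - 1) = p"
  proof (rule antisym)
    show "degree (monom (1::int) p - 1) \<le> p"
      by (rule order.trans[OF degree_diff_le_max]) (simp add: degree_monom_le)
    show "p \<le> degree (monom (1::int) p - 1)" using cp by (intro le_degree) simp
  qed
  have "degree (Np p * [:-1,1:]) = degree (Np p) + 1"
    using ne by (subst degree_mult_eq) auto
  with d1 Np_mult[of p] show "degree (Np p) = p - 1" by simp
  have "lead_coeff (Np p * [:-1,1:]) = lead_coeff (Np p)" by (simp only: lead_coeff_mult) simp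
  moreover have "lead_coeff (monom (1::int) p - 1) = 1" using d1 assms
    by (simp add: coeff_monom)
  ultimately show "lead_coeff (Np p) = 1" using Np_mult[of p] by metis
  show "Np p \<noteq> 0" by (fact ne)
qed

definition Fp :: "nat \<Rightarrow> int poly" where "Fp p = pcompose (Np p) [:1,1:]"

lemma Fp_shift: "pCons 0 (Fp p) = [:1,1:]^p - 1"
proof -
  have c1: "pcompose [:-1,1:] [:1,1:] = [:0::int,1:]" by (simp add: pcompose_pCons)
  have "pcompose (Np p * [:-1,1:]) [:1,1:] = Fp p * [:0,1:]"
    unfolding Fp_def by (simp only: pcompose_mult c1)
  also have "\<dots> = pCons 0 (Fp p)" by (simp add: mult.commute)
  finally have "pCons 0 (Fp p) = pcompose (monom 1 p - 1) [:1,1:]" using Np_mult by simp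
  also have "\<dots> = [:1,1:]^p - 1"
  proof -
    have "pcompose (monom (1::int) p) [:1,1:] = [:1,1:]^p"
      by (rule poly_eq_poly_eq_iff[THEN iffD1]) (simp add: poly_pcompose poly_monom fun_eq_iff)
    then show ?thesis by (simp add: pcompose_diff pcompose_1)
  qed
  finally show ?thesis .
qed

lemma Fp_coeff: "k < p \<Longrightarrow> coeff (Fp p) k = int (p choose (Suc k))"
proof -
  assume "k < p"
  have "coeff (Fp p) k = coeff (pCons 0 (Fp p)) (Suc k)" by simp
  also have "\<dots> = coeff ([:1,1:]^p) (Suc k)" by (simp add: Fp_shift)
  also have "\<dots> = int (p choose (Suc k))" using \<open>k < p\<close> by (simp add: coeff_linear_poly_power)
  finally show ?thesis .
qed

lemma Np_irreducible:
  assumes pr: "prime p"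
  shows "irreducible (Np p)"
proof -
  have p1: "p \<ge> 1" "p \<ge> 2" using prime_ge_2_nat[OF pr] by auto
  note NP = Np_deg_lead[OF p1(1)]
  have "\<not> Np p dvd 1"
  proof
    assume "Np p dvd 1"
    then obtain c where "Np p = [:c:]" by (auto simp: is_unit_poly_iff)
    then have "degree (Np p) = 0" by simp
    with NP p1 show False by simp
  qed
  moreover have "g dvd 1 \<or> h dvd 1" if gh: "Np p = g * h" for g h
  proof (rule ccontr)
    assume nu: "\<not> (g dvd 1 \<or> h dvd 1)"
    have gh0: "g \<noteq> 0" "h \<noteq> 0" using gh NP by auto
    have lgh: "lead_coeff g * lead_coeff h = 1" using gh NP(2) by (metis lead_coeff_mult)
    have dg: "degree g \<ge> 1"
    proof (rule ccontr)
      assume "\<not> degree g \<ge> 1"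
      then have "degree g = 0" by simp
      then have "g = [:lead_coeff g:]" by (metis degree_0_id)
      moreover have "lead_coeff g dvd 1" using lgh by (metis dvd_triv_left)
      ultimately show False using nu by (metis is_unit_const_poly_iff)
    qed
    have dh: "degree h \<ge> 1"
    proof (rule ccontr)
      assume "\<not> degree h \<ge> 1"
      then have "degree h = 0" by simp
      then have "h = [:lead_coeff h:]" by (metis degree_0_id)
      moreover have "lead_coeff h dvd 1" using lgh by (metis dvd_triv_right)
      ultimately show False using nu by (metis is_unit_const_poly_iff)
    qed
    define G where "G = pcompose g [:1,1:]"
    define H where "H = pcompose h [:1,1:]"
    have GH: "G * H = Fp p" unfolding G_def H_def Fp_def gh by (simp add: pcompose_mult)
    have dG: "degree G = degree g" "degree H = degree h" unfolding G_def H_def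
      by (simp_all add: degree_pcompose)
    have lG: "lead_coeff G = lead_coeff g" "lead_coeff H = lead_coeff h" unfolding G_def H_def
      by (simp_all add: lead_coeff_comp)
    have dF: "degree (Fp p) = p - 1" unfolding Fp_def using NP by (simp add: degree_pcompose)
    have prq: "prime (int p)" using pr by simp
    have cf: "\<forall>k < degree (G*H). int p dvd coeff (G*H) k"
    proof (intro allI impI)
      fix k assume "k < degree (G*H)"
      then have k: "k < p - 1" using GH dF by simp
      then have "coeff (G*H) k = int (p choose Suc k)" using GH Fp_coeff[of k p] by simp
      moreover have "p dvd (p choose Suc k)" using k pr by (intro dvd_choose_prime) auto
      ultimately show "int p dvd coeff (G*H) k" by simp
    qed
    have c0: "\<not> (int p)^2 dvd coeff (G*H) 0"
    proof
      assume "(int p)^2 dvd coeff (G*H) 0"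
      then have "(int p)^2 dvd int p" using GH Fp_coeff[of 0 p] p1 by simp
      then have "p^2 dvd p" by (metis of_nat_dvd_iff of_nat_power)
      then have "p * p \<le> p * 1" using p1 by (simp add: power2_eq_square dvd_imp_le)
      then show False using p1 by simp
    qed
    show False using eisenstein[OF prq _ _ _ cf c0] dG lG dg dh lgh by simp
  qed
  ultimately show ?thesis using NP unfolding irreducible_def by blast
qed


definition ev :: "complex \<Rightarrow> int poly \<Rightarrow> complex" where
  "ev z a = poly (map_poly of_int a) z"

lemma ev_add: "ev z (a + b) = ev z a + ev z b"
proof -
  have "map_poly (of_int :: int \<Rightarrow> complex) (a + b) = map_poly of_int a + map_poly of_int b"
    by (intro poly_eqI) (simp add: coeff_map_poly)
  then show ?thesis by (simp add: ev_def)
qed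

lemma ev_mult: "ev z (a * b) = ev z a * ev z b"
proof -
  have "map_poly (of_int :: int \<Rightarrow> complex) (a * b) = map_poly of_int a * map_poly of_int b"
    by (intro poly_eqI) (simp add: coeff_map_poly coeff_mult)
  then show ?thesis by (simp add: ev_def)
qed

lemma ev_minus: "ev z (- a) = - ev z a"
proof -
  have "map_poly (of_int :: int \<Rightarrow> complex) (- a) = - map_poly of_int a"
    by (intro poly_eqI) (simp add: coeff_map_poly)
  then show ?thesis by (simp add: ev_def)
qed

lemma ev_diff: "ev z (a - b) = ev z a - ev z b"
  using ev_add[of z a "-b"] ev_minus[of z b] by simp

lemma ev_pCons: "ev z (pCons c a) = of_int c + z * ev z a"
  by (simp add: ev_def map_poly_pCons)

lemma ev_const: "ev z [:c:] = of_int c"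
  using ev_pCons[of z c 0] by (simp add: ev_def)

lemma ev_smult: "ev z (smult c a) = of_int c * ev z a"
proof -
  have "smult c a = [:c:] * a" by simp
  then show ?thesis by (metis ev_mult ev_const)
qed

lemma Np_dvd:
  fixes z :: complex
  assumes pr: "prime p" and z: "ev z (Np p) = 0" and a: "ev z a = 0"
  shows "Np p dvd a"
proof -
  have p1: "p \<ge> 1" using prime_ge_2_nat[OF pr] by auto
  note NP = Np_deg_lead[OF p1]
  have prN: "prime_elem (Np p)" by (rule irreducible_imp_prime_elem[OF Np_irreducible[OF pr]])
  let ?P = "\<lambda>m. m \<noteq> 0 \<and> ev z m = 0"
  have "?P (Np p)" using NP z by simp
  then obtain m where m: "?P m" and mmin: "\<And>y. ?P y \<Longrightarrow> degree m \<le> degree y"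
    using ex_has_least_nat[of ?P "Np p" degree] by blast
  have key: "\<exists>c q. c \<noteq> 0 \<and> smult c f = m * q" if f: "ev z f = 0" for f
  proof -
    define r where "r = pseudo_mod f m"
    obtain c q where cq: "c \<noteq> 0" "smult c f = m * q + r"
      using pseudo_mod(1)[of m f] m unfolding r_def by blast
    have dr: "r = 0 \<or> degree r < degree m" using pseudo_mod(2)[of m f] m unfolding r_def by blast
    have "ev z r = 0"
    proof -
      have "ev z (smult c f) = ev z (m * q) + ev z r" using cq by (simp add: ev_add)
      then show ?thesis using f m by (simp add: ev_smult ev_mult)
    qed
    then have "r = 0" using dr mmin by force
    with cq show ?thesis by auto
  qed
  obtain c q where cq: "c \<noteq> 0" "smult c (Np p) = m * q" using key[OF z] by blast
  have "Np p dvd m * q" by (metis cq(2) dvd_smult dvd_refl)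
  then have "Np p dvd m \<or> Np p dvd q" using prN by (simp add: prime_elem_dvd_mult_iff)
  moreover have "\<not> Np p dvd q"
  proof
    assume "Np p dvd q"
    then obtain q' where q': "q = Np p * q'" by blast
    have sc: "smult c (Np p) = [:c:] * Np p" by simp
    have "[:c:] * Np p = (m * q') * Np p" using cq(2) q' sc by (metis mult.assoc mult.commute)
    then have e: "[:c:] = m * q'" using NP(3) by (metis mult_right_cancel)
    then have "q' \<noteq> 0" using cq by auto
    then have "degree m = 0" using e m by (metis add_is_0 degree_mult_eq degree_pCons_0)
    then obtain c0 where "m = [:c0:]" by (metis degree_0_id)
    then show False using m by (simp add: ev_const)
  qed
  ultimately have Nm: "Np p dvd m" by blast
  obtain c2 q2 where cq2: "c2 \<noteq> 0" "smult c2 a = m * q2" using key[OF a] by blast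
  have sc2: "smult c2 a = [:c2:] * a" by simp
  have "Np p dvd [:c2:] * a" using Nm cq2 sc2 by (metis dvd_mult2)
  then have "Np p dvd [:c2:] \<or> Np p dvd a" using prN by (metis prime_elem_dvd_mult_iff)
  moreover have "\<not> Np p dvd [:c2:]"
  proof
    assume "Np p dvd [:c2:]"
    then have "degree (Np p) \<le> degree [:c2:]" using cq2 by (intro dvd_imp_degree_le) auto
    then show False using NP prime_ge_2_nat[OF pr] by simp
  qed
  ultimately show ?thesis by blast
qed


section \<open>Integer multiples\<close>

lemma nmul_0[simp]: "nmul 0 x = 0" by (simp add: nmul_def)
lemma nmul_Suc: "nmul (Suc n) x = x + nmul n x" by (simp add: nmul_def add.commute)
lemma nmul_add_n: "nmul (m + n) x = nmul m x + nmul n x"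
  by (induction m) (simp_all add: nmul_Suc add.assoc)
lemma nmul_add_x: "nmul n (x + y) = nmul n x + nmul n y"
  by (induction n) (simp_all add: nmul_Suc algebra_simps)
lemma nmul_zero[simp]: "nmul n 0 = (0::'a::ab_group_add)"
  by (simp add: nmul_def)
lemma nmul_minus: "nmul n (- x) = - nmul n x"
  by (induction n) (simp_all add: nmul_Suc algebra_simps)
lemma nmul_diff_x: "nmul n (x - y) = nmul n x - nmul n y"
  by (simp only: diff_conv_add_uminus nmul_add_x nmul_minus)
lemma nmul_mult: "nmul (m * n) x = nmul m (nmul n x)"
  by (induction m) (simp_all add: nmul_Suc nmul_add_n)
lemma nmul_1[simp]: "nmul 1 x = x" by (simp add: nmul_def)
lemma nmul_hom:
  assumes "\<And>x y. f (x + y) = f x + f y"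
  shows "f (nmul n x) = nmul n (f x)"
proof -
  have f0: "f 0 = 0" using assms[of 0 0] by simp
  show ?thesis by (induction n) (simp_all add: nmul_Suc assms f0)
qed
lemma nmul_sum: "nmul n (\<Sum>i\<in>S. f i) = (\<Sum>i\<in>S. nmul n (f i))"
  by (induction S rule: infinite_finite_induct) (simp_all add: nmul_add_x)

definition zmul :: "int \<Rightarrow> 'a::ab_group_add \<Rightarrow> 'a" where
  "zmul k x = nmul (nat k) x - nmul (nat (- k)) x"

lemma zmul_nat_diff: "zmul (int m - int n) x = nmul m x - nmul n x"
proof (cases "n \<le> m")
  case True
  then have "nmul m x = nmul (m - n) x + nmul n x" by (metis le_add_diff_inverse2 nmul_add_n)
  then show ?thesis using True by (simp add: zmul_def nat_diff_distrib)
next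
  case False
  then have "nmul n x = nmul (n - m) x + nmul m x" by (metis le_add_diff_inverse2 nmul_add_n nat_le_linear)
  then show ?thesis using False by (simp add: zmul_def nat_diff_distrib)
qed

lemma int_split: obtains m n where "k = int m - int n"
proof -
  have "k = int (nat k) - int (nat (- k))" by simp
  then show ?thesis by (rule that)
qed

lemma zmul_int[simp]: "zmul (int n) x = nmul n x" by (simp add: zmul_def)
lemma zmul_0[simp]: "zmul 0 x = 0" by (simp add: zmul_def)
lemma zmul_1[simp]: "zmul 1 x = x" by (simp add: zmul_def nmul_def)
lemma zmul_zero[simp]: "zmul k 0 = (0::'a::ab_group_add)" by (simp add: zmul_def)

lemma zmul_add: "zmul (a + b) x = zmul a x + zmul b x"
proof -
  obtain m1 n1 where a: "a = int m1 - int n1" by (rule int_split)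
  obtain m2 n2 where b: "b = int m2 - int n2" by (rule int_split)
  have "a + b = int (m1 + m2) - int (n1 + n2)" using a b by simp
  then show ?thesis using a b by (simp only: zmul_nat_diff nmul_add_n) (simp add: algebra_simps)
qed

lemma zmul_add_x: "zmul k (x + y) = zmul k x + zmul k y"
  by (simp add: zmul_def nmul_add_x algebra_simps)
lemma zmul_minus_x: "zmul k (- x) = - zmul k x"
  by (simp add: zmul_def nmul_minus algebra_simps)
lemma zmul_diff_x: "zmul k (x - y) = zmul k x - zmul k y"
  by (simp add: zmul_def nmul_diff_x algebra_simps)
lemma zmul_minus: "zmul (- k) x = - zmul k x"
  by (simp add: zmul_def)

lemma zmul_mult: "zmul (a * b) x = zmul a (zmul b x)"
proof -
  obtain m1 n1 where a: "a = int m1 - int n1" by (rule int_split)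
  obtain m2 n2 where b: "b = int m2 - int n2" by (rule int_split)
  have ab: "a * b = int (m1 * m2 + n1 * n2) - int (m1 * n2 + n1 * m2)" unfolding a b by (simp add: algebra_simps)
  have L: "zmul (a*b) x = nmul (m1*m2) x + nmul (n1*n2) x - (nmul (m1*n2) x + nmul (n1*m2) x)"
    unfolding ab zmul_nat_diff nmul_add_n ..
  have R: "zmul a (zmul b x) = nmul m1 (nmul m2 x) - nmul m1 (nmul n2 x) - (nmul n1 (nmul m2 x) - nmul n1 (nmul n2 x))"
    unfolding a b zmul_nat_diff nmul_diff_x ..
  show ?thesis unfolding L R nmul_mult by (simp add: algebra_simps)
qed

lemma zmul_hom:
  assumes "\<And>x y. f (x + y) = f x + f y"
  shows "f (zmul k x) = zmul k (f x)"
proof -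
  have f0: "f 0 = 0" using assms[of 0 0] by simp
  have fm: "f (- y) = - f y" for y
  proof -
    have "f y + f (- y) = 0" using assms[of y "-y"] f0 by simp
    then show ?thesis by (metis neg_eq_iff_add_eq_0)
  qed
  have fd: "f (a - b) = f a - f b" for a b using assms[of a "-b"] fm by simp
  show ?thesis by (simp add: zmul_def fd nmul_hom[OF assms])
qed

lemma zmul_sum: "zmul k (\<Sum>i\<in>S. f i) = (\<Sum>i\<in>S. zmul k (f i))"
  by (induction S rule: infinite_finite_induct) (simp_all add: zmul_add_x)


lemma theta_pow: "p > 0 \<Longrightarrow> theta p ^ p = 1"
  by (simp add: theta_def DeMoivre)

lemma theta_ne_1: assumes "p \<ge> 2" shows "theta p \<noteq> 1"
proof
  assume "theta p = 1"
  then have "cos (2 * pi / real p) = 1" unfolding theta_def by (metis cis.sel(1) one_complex.sel(1))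
  then obtain n :: int where n: "2 * pi / real p = n * 2 * pi" by (auto simp: cos_one_2pi_int)
  have "real_of_int n * real p = 1" using n assms by (simp add: field_simps)
  then have "n * int p = 1" by (metis of_int_1 of_int_eq_iff of_int_mult of_int_of_nat_eq)
  then have "int p dvd 1" by (metis dvd_triv_right)
  then show False using assms by simp
qed

lemma ev_zero[simp]: "ev z 0 = 0" by (simp add: ev_def)

lemma ev_monom: "ev z (monom c k) = of_int c * z ^ k"
  by (simp add: ev_def map_poly_monom poly_monom)

lemma ev_sum: "ev z (\<Sum>i\<in>S. f i) = (\<Sum>i\<in>S. ev z (f i))"
  by (induction S rule: infinite_finite_induct) (simp_all add: ev_add)

lemma ev_Np: "ev z (Np p) = (\<Sum>k<p. z ^ k)"
  by (simp add: Np_def ev_sum ev_monom)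

lemma ev_Np_theta: assumes "p \<ge> 2" shows "ev (theta p) (Np p) = 0"
proof -
  have "(\<Sum>k<p. theta p ^ k) = (theta p ^ p - 1) / (theta p - 1)"
    by (rule geometric_sum) (rule theta_ne_1[OF assms])
  also have "\<dots> = 0" using assms by (simp add: theta_pow)
  finally show ?thesis by (simp add: ev_Np)
qed

locale modS =
  fixes p :: nat and T :: "'a::ab_group_add \<Rightarrow> 'a"
  assumes pr: "prime p" and Sm: "S_module p T" and su: "surj (\<lambda>x. x - T x)"
begin

lemma p2: "p \<ge> 2" using prime_ge_2_nat[OF pr] .

lemma T_add: "T (x + y) = T x + T y" using Sm unfolding S_module_def by blast
lemma Tp: "T ^^ p = id" using Sm unfolding S_module_def by blast
lemma T_0[simp]: "T 0 = 0" using T_add[of 0 0] by simp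
lemma T_minus: "T (- x) = - T x"
proof -
  have "T x + T (- x) = 0" using T_add[of x "-x"] by simp
  then show ?thesis by (metis neg_eq_iff_add_eq_0)
qed
lemma T_diff: "T (x - y) = T x - T y"
  using T_add[of x "-y"] T_minus[of y] by simp
lemma T_zmul: "T (zmul k x) = zmul k (T x)" by (rule zmul_hom[OF T_add])
lemma T_sum: "T (\<Sum>i\<in>S. f i) = (\<Sum>i\<in>S. T (f i))"
  by (induction S rule: infinite_finite_induct) (simp_all add: T_add)
lemma Tpow_diff: "(T ^^ k) (x - y) = (T ^^ k) x - (T ^^ k) y"
  by (induction k) (simp_all add: T_diff)

definition act :: "int poly \<Rightarrow> 'a \<Rightarrow> 'a" where
  "act a x = fold_coeffs (\<lambda>c y. zmul c x + T y) a 0"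

lemma act_0[simp]: "act 0 x = 0" by (simp add: act_def)

lemma act_pCons: "act (pCons c q) x = zmul c x + T (act q x)"
proof (cases "q = 0")
  case True
  then show ?thesis by (cases "c = 0") (simp_all add: act_def)
next
  case False
  then show ?thesis by (simp add: act_def)
qed

lemma act_add_poly: "act (a + b) x = act a x + act b x"
proof (induction a arbitrary: b rule: pCons_induct)
  case 0
  then show ?case by simp
next
  case (pCons c q)
  obtain d r where b: "b = pCons d r" by (cases b)
  show ?case unfolding b add_pCons act_pCons pCons.IH zmul_add T_add by (simp add: algebra_simps)
qed

lemma act_add_x: "act a (x + y) = act a x + act a y"
  by (induction a rule: pCons_induct) (simp_all add: act_pCons zmul_add_x T_add algebra_simps)

lemma act_zero_x[simp]: "act a 0 = 0"
  by (induction a rule: pCons_induct) (simp_all add: act_pCons)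

lemma act_T: "act a (T x) = T (act a x)"
  by (induction a rule: pCons_induct) (simp_all add: act_pCons T_add T_zmul)

lemma act_zmul: "act a (zmul k x) = zmul k (act a x)"
proof (induction a rule: pCons_induct)
  case 0
  then show ?case by simp
next
  case (pCons c q)
  have "zmul c (zmul k x) = zmul k (zmul c x)" by (metis zmul_mult mult.commute)
  then show ?case by (simp add: act_pCons pCons.IH T_zmul zmul_add_x)
qed

lemma act_smult: "act (smult k a) x = zmul k (act a x)"
  by (induction a rule: pCons_induct) (simp_all add: act_pCons zmul_mult T_zmul zmul_add_x)

lemma act_mult: "act (a * b) x = act a (act b x)"
proof (induction a rule: pCons_induct)
  case 0
  then show ?case by simp
next
  case (pCons c q)
  have "act (pCons c q * b) x = act (smult c b) x + act (pCons 0 (q * b)) x"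
    by (simp add: act_add_poly)
  also have "\<dots> = act (pCons c q) (act b x)"
    by (simp add: act_smult act_pCons pCons.IH)
  finally show ?case .
qed

lemma act_const: "act [:c:] x = zmul c x" by (simp add: act_pCons)
lemma act_1: "act 1 x = x" by (simp add: one_pCons act_const)
lemma act_X: "act [:0, 1:] x = T x" by (simp add: act_pCons)

lemma act_minus_poly: "act (- a) x = - act a x"
proof -
  have "act (a + - a) x = 0" by simp
  then show ?thesis unfolding act_add_poly by (metis neg_eq_iff_add_eq_0)
qed

lemma act_diff_poly: "act (a - b) x = act a x - act b x"
  using act_add_poly[of a "-b" x] act_minus_poly[of b x] by simp

lemma act_minus_x: "act a (- x) = - act a x"
proof -
  have "act a (x + - x) = 0" by simp
  then show ?thesis unfolding act_add_x by (metis neg_eq_iff_add_eq_0)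
qed

lemma act_diff_x: "act a (x - y) = act a x - act a y"
  using act_add_x[of a x "-y"] act_minus_x[of a y] by simp

lemma act_sum_x: "act a (\<Sum>i\<in>S. f i) = (\<Sum>i\<in>S. act a (f i))"
  by (induction S rule: infinite_finite_induct) (simp_all add: act_add_x)

lemma act_sum_poly: "act (\<Sum>i\<in>S. f i) x = (\<Sum>i\<in>S. act (f i) x)"
  by (induction S rule: infinite_finite_induct) (simp_all add: act_add_poly)

lemma act_monom1: "act (monom 1 k) x = (T ^^ k) x"
proof (induction k)
  case 0
  then show ?case by (simp add: monom_0 act_const)
next
  case (Suc k)
  then show ?case by (simp add: monom_Suc act_pCons)
qed

lemma sumT_zero: "(\<Sum>k<p. (T ^^ k) x) = 0"
proof -
  obtain y where y: "x = y - T y" using su by (metis surj_def)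
  have "(\<Sum>k<p. (T ^^ k) x) = (\<Sum>k<p. (T ^^ k) y - (T ^^ Suc k) y)"
    unfolding y Tpow_diff by (simp add: funpow_swap1)
  also have "\<dots> = (T ^^ 0) y - (T ^^ p) y" by (rule sum_lessThan_telescope')
  also have "\<dots> = 0" by (simp add: Tp)
  finally show ?thesis .
qed

lemma act_Np: "act (Np p) x = 0"
  by (simp add: Np_def act_sum_poly act_monom1 sumT_zero)

lemma act_dvd_zero: "Np p dvd a \<Longrightarrow> act a x = 0"
  by (auto simp: act_mult act_Np mult.commute[of "Np p"])

lemma act_ev_eq: "ev (theta p) a = ev (theta p) b \<Longrightarrow> act a x = act b x"
proof -
  assume "ev (theta p) a = ev (theta p) b"
  then have "ev (theta p) (a - b) = 0" by (simp add: ev_diff)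
  then have "Np p dvd a - b" by (rule Np_dvd[OF pr ev_Np_theta[OF p2]])
  then have "act (a - b) x = 0" by (rule act_dvd_zero)
  then show ?thesis by (simp add: act_diff_poly)
qed

end

lemma Ztheta_iff: "z \<in> Ztheta p \<longleftrightarrow> (\<exists>a. z = ev (theta p) a)"
  by (auto simp: Ztheta_def ev_def)

lemma R_ev[simp, intro]: "ev (theta p) a \<in> Ztheta p" by (auto simp: Ztheta_iff)

lemma R_add[intro]: "z \<in> Ztheta p \<Longrightarrow> w \<in> Ztheta p \<Longrightarrow> z + w \<in> Ztheta p"
  by (auto simp: Ztheta_iff ev_add[symmetric])
lemma R_mult[intro]: "z \<in> Ztheta p \<Longrightarrow> w \<in> Ztheta p \<Longrightarrow> z * w \<in> Ztheta p"
  by (auto simp: Ztheta_iff ev_mult[symmetric])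
lemma R_minus[intro]: "z \<in> Ztheta p \<Longrightarrow> - z \<in> Ztheta p"
  by (auto simp: Ztheta_iff ev_minus[symmetric])
lemma R_diff[intro]: "z \<in> Ztheta p \<Longrightarrow> w \<in> Ztheta p \<Longrightarrow> z - w \<in> Ztheta p"
  by (auto simp: Ztheta_iff ev_diff[symmetric])
lemma R_of_int[intro, simp]: "of_int k \<in> Ztheta p"
  by (metis R_ev ev_const)
lemma R_of_nat[intro, simp]: "of_nat k \<in> Ztheta p"
  by (metis R_of_int of_int_of_nat_eq)
lemma R_1[intro, simp]: "1 \<in> Ztheta p" by (metis R_of_int of_int_1)
lemma R_0[intro, simp]: "0 \<in> Ztheta p" by (metis R_of_int of_int_0)
lemma ev_X: "ev z [:0, 1:] = z" by (simp add: ev_pCons ev_const)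
lemma R_theta[intro, simp]: "theta p \<in> Ztheta p" by (metis R_ev ev_X)
lemma R_pow[intro]: "z \<in> Ztheta p \<Longrightarrow> z ^ n \<in> Ztheta p"
  by (induction n) auto
lemma R_sum[intro]: "(\<And>i. i \<in> S \<Longrightarrow> f i \<in> Ztheta p) \<Longrightarrow> (\<Sum>i\<in>S. f i) \<in> Ztheta p"
  by (induction S rule: infinite_finite_induct) auto
lemma R_om[intro, simp]: "1 - theta p \<in> Ztheta p" by auto
lemma R_sign[intro, simp]: "(-1) ^ n \<in> Ztheta p" by auto

lemma R_decomp:
  assumes "z \<in> Ztheta p"
  shows "\<exists>n::int. \<exists>r \<in> Ztheta p. z = of_int n + (1 - theta p) * r"
proof -
  obtain a where a: "z = ev (theta p) a" using assms by (auto simp: Ztheta_iff)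
  have "\<exists>n::int. \<exists>r \<in> Ztheta p. ev (theta p) a = of_int n + (1 - theta p) * r"
  proof (induction a rule: pCons_induct)
    case 0
    then show ?case by (intro exI[of _ 0] bexI[of _ 0]) auto
  next
    case (pCons c q)
    then obtain n r where nr: "r \<in> Ztheta p" "ev (theta p) q = of_int n + (1 - theta p) * r" by blast
    have "ev (theta p) (pCons c q) = of_int (c + n) + (1 - theta p) * (r - of_int n - (1 - theta p) * r)"
      unfolding ev_pCons nr(2) by (simp add: algebra_simps)
    moreover have "r - of_int n - (1 - theta p) * r \<in> Ztheta p" using nr by auto
    ultimately show ?case by blast
  qed
  then show ?thesis using a by simp
qed

lemma om_ne_0: "prime p \<Longrightarrow> 1 - theta p \<noteq> 0"
  using theta_ne_1[of p] prime_ge_2_nat[of p] by auto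

lemma cyc_fact:
  assumes pr: "prime p"
  shows "\<exists>S \<in> Ztheta p. (1 - theta p) ^ (p - 1) = of_nat p * ((-1) ^ p * (1 - (1 - theta p) * S))"
proof -
  define th where "th = theta p"
  define y where "y = th - 1"
  have p2: "p \<ge> 2" using prime_ge_2_nat[OF pr] .
  have y0: "y \<noteq> 0" using theta_ne_1[OF p2] unfolding y_def th_def by simp
  define d where "d k = (p choose k) div p" for k
  have dk: "of_nat (p choose k) = (of_nat p * of_nat (d k) :: complex)" if "k \<in> {1..<p}" for k
  proof -
    have "p dvd (p choose k)" using that pr by (intro dvd_choose_prime) auto
    then show ?thesis unfolding d_def by (metis dvd_mult_div_cancel of_nat_mult)
  qed
  have d1: "d (Suc 0) = Suc 0" using p2 by (simp add: d_def)
  define S where "S = (\<Sum>k\<in>{2..<p}. of_nat (d k) * y ^ (k - 2))"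
  have SR: "S \<in> Ztheta p" unfolding S_def y_def th_def by (intro R_sum R_mult R_pow R_diff) auto
  have "(y + 1) ^ p = (\<Sum>k\<le>p. of_nat (p choose k) * y ^ k * 1 ^ (p - k))" by (rule binomial_ring)
  also have "\<dots> = (\<Sum>k\<le>p. of_nat (p choose k) * y ^ k)" by simp
  also have "{..p} = insert 0 (insert p {1..<p})" using p2 by auto
  also have "(\<Sum>k\<in>insert 0 (insert p {1..<p}). of_nat (p choose k) * y ^ k)
      = 1 + (y ^ p + (\<Sum>k\<in>{1..<p}. of_nat (p choose k) * y ^ k))"
    using p2 by (subst sum.insert) (auto simp: sum.insert)
  also have "(\<Sum>k\<in>{1..<p}. of_nat (p choose k) * y ^ k) = (\<Sum>k\<in>{1..<p}. of_nat p * of_nat (d k) * y ^ k)"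
    by (rule sum.cong) (auto simp: dk)
  also have "{1..<p} = insert 1 {2..<p}" using p2 by auto
  also have "(\<Sum>k\<in>insert 1 {2..<p}. of_nat p * of_nat (d k) * y ^ k) =
      of_nat p * y + (\<Sum>k\<in>{2..<p}. of_nat p * of_nat (d k) * y ^ k)"
    by (simp add: d1)
  also have "(\<Sum>k\<in>{2..<p}. of_nat p * of_nat (d k) * y ^ k) = of_nat p * y * (y * S)"
    unfolding S_def sum_distrib_left
  proof (rule sum.cong)
    fix k assume "k \<in> {2..<p}"
    then have "k = Suc (Suc (k - 2))" by auto
    then have "y ^ k = y * (y * y ^ (k - 2))" by (metis power_Suc)
    then show "of_nat p * of_nat (d k) * y ^ k = of_nat p * y * (y * (of_nat (d k) * y ^ (k - 2)))"
      by (simp add: algebra_simps)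
  qed simp
  finally have e1: "(y + 1) ^ p = 1 + (y ^ p + (of_nat p * y + of_nat p * y * (y * S)))" .
  have "(y + 1) ^ p = 1" unfolding y_def th_def using p2 by (simp add: theta_pow)
  moreover obtain m where m: "p = Suc m" using p2 by (cases p) auto
  moreover have "y ^ p = y * y ^ (p - 1)" by (simp add: m)
  ultimately have "y * (y ^ (p - 1) + of_nat p * (1 + y * S)) = 0"
    using e1 by (simp add: algebra_simps)
  then have e2: "y ^ (p - 1) = - of_nat p * (1 + y * S)" using y0 by (simp add: add_eq_0_iff2)
  have "1 - th = (-1) * y" unfolding y_def by simp
  then have "(1 - th) ^ (p - 1) = (-1) ^ (p - 1) * y ^ (p - 1)" by (simp only: power_mult_distrib)
  also have "\<dots> = (-1) ^ (p - 1) * (- of_nat p * (1 + y * S))" by (simp only: e2)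
  also have "\<dots> = of_nat p * ((-1) ^ p * (1 - (1 - th) * S))" unfolding y_def
    by (simp add: m algebra_simps)
  finally show ?thesis using SR unfolding th_def by blast
qed


context modS
begin

abbreviation "th \<equiv> theta p"
abbreviation "om \<equiv> 1 - theta p"
abbreviation "R \<equiv> Ztheta p"
abbreviation "RP \<equiv> Ztheta_inv_p p"

definition Act :: "complex \<Rightarrow> 'a \<Rightarrow> 'a" where
  "Act z x = act (SOME a. z = ev th a) x"

lemma Act_ev: "Act (ev th a) x = act a x"
proof -
  have "ev th a = ev th (SOME b. ev th a = ev th b)" by (rule someI[of "\<lambda>b. ev th a = ev th b" a]) simp
  then show ?thesis unfolding Act_def by (metis act_ev_eq)
qed

lemma R_obtain: "z \<in> R \<Longrightarrow> (\<And>a. z = ev th a \<Longrightarrow> thesis) \<Longrightarrow> thesis"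
  by (auto simp: Ztheta_iff)

lemma Act_add: "z \<in> R \<Longrightarrow> w \<in> R \<Longrightarrow> Act (z + w) x = Act z x + Act w x"
  by (elim R_obtain) (simp add: ev_add[symmetric] Act_ev act_add_poly)
lemma Act_mult: "z \<in> R \<Longrightarrow> w \<in> R \<Longrightarrow> Act (z * w) x = Act z (Act w x)"
  by (elim R_obtain) (simp add: ev_mult[symmetric] Act_ev act_mult)
lemma Act_diff: "z \<in> R \<Longrightarrow> w \<in> R \<Longrightarrow> Act (z - w) x = Act z x - Act w x"
  by (elim R_obtain) (simp add: ev_diff[symmetric] Act_ev act_diff_poly)
lemma Act_add_x: "z \<in> R \<Longrightarrow> Act z (x + y) = Act z x + Act z y"
  by (elim R_obtain) (simp add: Act_ev act_add_x)
lemma Act_diff_x: "z \<in> R \<Longrightarrow> Act z (x - y) = Act z x - Act z y"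
  by (elim R_obtain) (simp add: Act_ev act_diff_x)
lemma Act_zero_x: "z \<in> R \<Longrightarrow> Act z 0 = 0"
  by (elim R_obtain) (simp add: Act_ev)
lemma Act_sum_x: "z \<in> R \<Longrightarrow> Act z (\<Sum>i\<in>S. f i) = (\<Sum>i\<in>S. Act z (f i))"
  by (elim R_obtain) (simp add: Act_ev act_sum_x)
lemma Act_of_int: "Act (of_int k) x = zmul k x"
  by (metis Act_ev ev_const act_const)
lemma Act_of_nat: "Act (of_nat n) x = nmul n x"
  by (metis Act_of_int of_int_of_nat_eq zmul_int)
lemma Act_1: "Act 1 x = x" by (metis Act_of_nat of_nat_1 nmul_1)
lemma Act_0: "Act 0 x = 0" by (metis Act_of_nat of_nat_0 nmul_0)
lemma Act_th: "Act th x = T x" by (metis Act_ev ev_X act_X)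
lemma Act_om: "Act om x = x - T x" by (simp add: Act_diff Act_1 Act_th)
lemma Act_comm: "z \<in> R \<Longrightarrow> w \<in> R \<Longrightarrow> Act z (Act w x) = Act w (Act z x)"
  by (metis Act_mult mult.commute)

lemma W_fact: obtains W where "W \<in> R" "om ^ (p - 1) = of_nat p * W"
proof -
  obtain S where S: "S \<in> R" "om ^ (p - 1) = of_nat p * ((-1) ^ p * (1 - om * S))"
    using cyc_fact[OF pr] by blast
  have "(-1) ^ p * (1 - om * S) \<in> R" using S(1) by (intro R_mult R_diff) auto
  then show ?thesis using S(2) that by blast
qed

lemma U_fact: obtains U where "U \<in> R" "of_nat p = om ^ (p - 1) * U"
proof -
  obtain S where S: "S \<in> R" "om ^ (p - 1) = of_nat p * ((-1) ^ p * (1 - om * S))"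
    using cyc_fact[OF pr] by blast
  define v where "v = om * S"
  define G where "G = (\<Sum>i<p - 1. v ^ i)"
  have sq: "((-1::complex) ^ p) * (-1) ^ p = 1" by (simp flip: power_mult_distrib)
  have pQ: "of_nat p * (1 - v) = (-1) ^ p * om ^ (p - 1)"
  proof -
    have "(-1) ^ p * om ^ (p - 1) = ((-1) ^ p * (-1) ^ p) * (of_nat p * (1 - v))"
      unfolding S(2) v_def by (simp add: mult_ac)
    then show ?thesis using sq by simp
  qed
  have h: "1 - v ^ (p - 1) = (1 - v) * G" unfolding G_def by (rule one_diff_power_eq)
  have "of_nat p * v ^ (p - 1) + of_nat p * (1 - v) * G = of_nat p * (v ^ (p - 1) + (1 - v) * G)"
    by (simp add: algebra_simps)
  also have "\<dots> = of_nat p" unfolding h[symmetric] by simp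
  finally have "of_nat p = of_nat p * v ^ (p - 1) + of_nat p * (1 - v) * G" by simp
  also have "\<dots> = of_nat p * v ^ (p - 1) + ((-1) ^ p * om ^ (p - 1)) * G" by (simp only: pQ)
  also have "v ^ (p - 1) = om ^ (p - 1) * S ^ (p - 1)" unfolding v_def by (simp only: power_mult_distrib)
  also have "of_nat p * (om ^ (p - 1) * S ^ (p - 1)) + ((-1) ^ p * om ^ (p - 1)) * G
      = om ^ (p - 1) * (of_nat p * S ^ (p - 1) + (-1) ^ p * G)" by (simp add: distrib_left mult_ac)
  finally show ?thesis
    by (rule that[rotated]) (auto simp: G_def v_def intro!: R_add R_mult R_pow R_sum S(1))
qed

lemma p_omR: obtains r where "r \<in> R" "of_nat p = om * r"
proof -
  obtain U where U: "U \<in> R" "of_nat p = om ^ (p - 1) * U" by (rule U_fact)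
  have pm: "p - 1 = Suc (p - 2)" using p2 by simp
  have "om ^ (p - 1) = om * om ^ (p - 2)" unfolding pm by (rule power_Suc)
  then have "of_nat p = om * (om ^ (p - 2) * U)" using U(2) by (metis mult.assoc)
  moreover have "om ^ (p - 2) * U \<in> R" using U(1) by (intro R_mult R_pow) auto
  ultimately show ?thesis using that by blast
qed

lemma om_nz: "om \<noteq> 0" by (rule om_ne_0[OF pr])
lemma p_nz: "(of_nat p :: complex) \<noteq> 0" using p2 by simp

lemma RP_iff: "z \<in> RP \<longleftrightarrow> (\<exists>a n. a \<in> R \<and> z = a / om ^ n)"
proof
  assume "z \<in> RP"
  then obtain c k where ck: "c \<in> R" "z = c / of_nat p ^ k" by (auto simp: Ztheta_inv_p_def)
  obtain W where W: "W \<in> R" "om ^ (p - 1) = of_nat p * W" by (rule W_fact)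
  have W0: "W \<noteq> 0" using W(2) om_nz by auto
  have "1 / of_nat p = W / om ^ (p - 1)" unfolding W(2) using W0 p_nz by (simp add: field_simps)
  then have e: "1 / of_nat p = W / om ^ (p - 1)" .
  have "z = c * (1 / of_nat p) ^ k" using ck(2) by (simp add: power_one_over)
  also have "\<dots> = c * (W / om ^ (p - 1)) ^ k" by (simp only: e)
  also have "\<dots> = (c * W ^ k) / om ^ ((p - 1) * k)" by (simp add: power_divide power_mult)
  finally show "\<exists>a n. a \<in> R \<and> z = a / om ^ n" using ck(1) W(1) by blast
next
  assume "\<exists>a n. a \<in> R \<and> z = a / om ^ n"
  then obtain a n where an: "a \<in> R" "z = a / om ^ n" by blast
  obtain U where U: "U \<in> R" "of_nat p = om ^ (p - 1) * U" by (rule U_fact)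
  have pm: "p - 1 = Suc (p - 2)" using p2 by simp
  have "1 / om = (om ^ (p - 2) * U) / of_nat p" using U(2) om_nz p_nz unfolding pm by (simp add: field_simps)
  then have e: "1 / om = (om ^ (p - 2) * U) / of_nat p" .
  have "z = a * (1 / om) ^ n" using an(2) by (simp add: power_one_over)
  also have "\<dots> = a * ((om ^ (p - 2) * U) / of_nat p) ^ n" by (simp only: e)
  finally have "z = a * ((om ^ (p - 2) * U) / of_nat p) ^ n" .
  also have "\<dots> = (a * (om ^ (p - 2) * U) ^ n) / of_nat p ^ n" by (simp add: power_divide)
  finally show "z \<in> RP" unfolding Ztheta_inv_p_def using an(1) U(1) by blast
qed

lemma RP_R: "a \<in> R \<Longrightarrow> a \<in> RP"
  unfolding RP_iff by (intro exI[of _ a] exI[of _ 0]) simp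

lemma RP_add: "z \<in> RP \<Longrightarrow> w \<in> RP \<Longrightarrow> z + w \<in> RP"
proof -
  assume "z \<in> RP" "w \<in> RP"
  then obtain a n b m where ab: "a \<in> R" "z = a / om ^ n" "b \<in> R" "w = b / om ^ m" unfolding RP_iff by blast
  have "z + w = (a * om ^ m + b * om ^ n) / om ^ (n + m)" unfolding ab(2) ab(4) using om_nz by (simp add: field_simps power_add)
  moreover have "a * om ^ m + b * om ^ n \<in> R" using ab(1,3) by (intro R_add R_mult R_pow) auto
  ultimately show ?thesis unfolding RP_iff by blast
qed

lemma RP_mult: "z \<in> RP \<Longrightarrow> w \<in> RP \<Longrightarrow> z * w \<in> RP"
proof -
  assume "z \<in> RP" "w \<in> RP"
  then obtain a n b m where ab: "a \<in> R" "z = a / om ^ n" "b \<in> R" "w = b / om ^ m" unfolding RP_iff by blast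
  have "z * w = (a * b) / om ^ (n + m)" unfolding ab(2) ab(4) using om_nz by (simp add: field_simps power_add)
  moreover have "a * b \<in> R" using ab(1,3) by (intro R_mult)
  ultimately show ?thesis unfolding RP_iff by blast
qed

lemma RP_inv_om: "1 / om \<in> RP"
  unfolding RP_iff by (intro exI[of _ 1] exI[of _ 1]) simp

lemma RP_inv_p: "1 / of_nat p \<in> RP"
  unfolding Ztheta_inv_p_def by (intro CollectI exI[of _ 1] exI[of _ 1]) simp

end

context modS
begin

definition nextc :: "'a \<Rightarrow> 'a" where "nextc y = (SOME x. x - T x = y)"

lemma nextc_spec: "nextc y - T (nextc y) = y"
proof -
  obtain x where "y = x - T x" using su by (metis surj_def)
  then show ?thesis unfolding nextc_def by (metis (mono_tags, lifting) someI)
qed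

definition chain :: "'a \<Rightarrow> nat \<Rightarrow> 'a" where "chain e n = (nextc ^^ n) e"

lemma chain_0[simp]: "chain e 0 = e" by (simp add: chain_def)

lemma chain_step: "Act om (chain e (Suc n)) = chain e n"
  by (simp add: chain_def Act_om nextc_spec)

lemma chain_pow: "Act (om ^ k) (chain e (n + k)) = chain e n"
proof (induction k arbitrary: n)
  case 0
  then show ?case by (simp add: Act_1)
next
  case (Suc k)
  have A: "Act (om ^ Suc k) x = Act om (Act (om ^ k) x)" for x by (simp add: Act_mult R_pow)
  have eq: "n + Suc k = Suc n + k" by simp
  show ?case by (simp only: A eq Suc.IH chain_step)
qed

lemma Act_om_pow_surj: "\<exists>z. Act (om ^ k) z = x"
  using chain_pow[of k x 0] by auto

definition Psi :: "'a \<Rightarrow> complex \<Rightarrow> 'a" where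
  "Psi e z = (let r = (SOME r. fst r \<in> R \<and> z = fst r / om ^ snd r) in Act (fst r) (chain e (snd r)))"

lemma Psi_wd_aux:
  assumes "a \<in> R" "b \<in> R" "a / om ^ n = b / om ^ m" "n \<le> m"
  shows "Act a (chain e n) = Act b (chain e m)"
proof -
  have "b = a * om ^ (m - n)"
  proof -
    have "b = a / om ^ n * om ^ m" using assms(3) om_nz by simp
    also have "om ^ m = om ^ n * om ^ (m - n)" using assms(4) by (simp flip: power_add)
    finally show ?thesis using om_nz by simp
  qed
  then have "Act b (chain e m) = Act a (Act (om ^ (m - n)) (chain e (n + (m - n))))"
    using assms(1,4) by (simp add: Act_mult R_pow)
  also have "\<dots> = Act a (chain e n)" by (simp only: chain_pow)
  finally show ?thesis by simp
qed

lemma Psi_wd: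
  assumes "a \<in> R" "b \<in> R" "a / om ^ n = b / om ^ m"
  shows "Act a (chain e n) = Act b (chain e m)"
  using Psi_wd_aux[OF assms] Psi_wd_aux[OF assms(2,1) assms(3)[symmetric]] by (cases "n \<le> m") auto

lemma Psi_eq: assumes "a \<in> R" shows "Psi e (a / om ^ n) = Act a (chain e n)"
proof -
  let ?P = "\<lambda>r. fst r \<in> R \<and> a / om ^ n = fst r / om ^ snd r"
  have "?P (a, n)" using assms by simp
  then have Pr: "?P (SOME r. ?P r)" by (rule someI)
  define r where "r = (SOME r. ?P r)"
  have r: "fst r \<in> R" "a / om ^ n = fst r / om ^ snd r" using Pr unfolding r_def by auto
  have "Psi e (a / om ^ n) = Act (fst r) (chain e (snd r))" unfolding Psi_def Let_def r_def ..
  also have "\<dots> = Act a (chain e n)" by (rule Psi_wd[OF r(1) assms r(2)[symmetric]])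
  finally show ?thesis .
qed

lemma Psi_R: "a \<in> R \<Longrightarrow> Psi e a = Act a e"
  using Psi_eq[of a e 0] by simp

lemma Psi_zero: "Psi e 0 = 0"
  using Psi_R[of 0 e] by (simp add: Act_0)

lemma RP_obtain: "z \<in> RP \<Longrightarrow> (\<And>a n. a \<in> R \<Longrightarrow> z = a / om ^ n \<Longrightarrow> thesis) \<Longrightarrow> thesis"
  unfolding RP_iff by blast

lemma Psi_add:
  assumes "z \<in> RP" "w \<in> RP"
  shows "Psi e (z + w) = Psi e z + Psi e w"
proof -
  obtain a n where an: "a \<in> R" "z = a / om ^ n" using assms(1) by (rule RP_obtain)
  obtain b m where bm: "b \<in> R" "w = b / om ^ m" using assms(2) by (rule RP_obtain)
  have e: "z + w = (a * om ^ m + b * om ^ n) / om ^ (n + m)"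
    unfolding an(2) bm(2) using om_nz by (simp add: field_simps power_add)
  have R1: "a * om ^ m \<in> R" "b * om ^ n \<in> R" using an(1) bm(1) by (auto intro!: R_mult R_pow)
  have "Psi e (z + w) = Act (a * om ^ m + b * om ^ n) (chain e (n + m))"
    unfolding e by (rule Psi_eq) (use R1 in auto)
  also have "\<dots> = Act a (Act (om ^ m) (chain e (n + m))) + Act b (Act (om ^ n) (chain e (m + n)))"
    using R1 an(1) bm(1) by (simp add: Act_add Act_mult R_pow add.commute)
  also have "\<dots> = Act a (chain e n) + Act b (chain e m)" by (simp only: chain_pow)
  also have "\<dots> = Psi e z + Psi e w" using an bm by (simp add: Psi_eq)
  finally show ?thesis .
qed

lemma Psi_scal:
  assumes "c \<in> R" "z \<in> RP"
  shows "Psi e (c * z) = Act c (Psi e z)"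
proof -
  obtain a n where an: "a \<in> R" "z = a / om ^ n" using assms(2) by (rule RP_obtain)
  have "c * z = (c * a) / om ^ n" using an by simp
  then have "Psi e (c * z) = Act (c * a) (chain e n)" using assms(1) an(1) by (simp add: Psi_eq R_mult)
  also have "\<dots> = Act c (Psi e z)" using assms(1) an by (simp add: Act_mult Psi_eq)
  finally show ?thesis .
qed

definition psi :: "('i \<Rightarrow> 'a) \<Rightarrow> ('i \<Rightarrow> complex) \<Rightarrow> 'a" where
  "psi E f = (\<Sum>i\<in>{i. f i \<noteq> 0}. Psi (E i) (f i))"

lemma psi_sup:
  assumes "finite S" "{i. f i \<noteq> 0} \<subseteq> S"
  shows "psi E f = (\<Sum>i\<in>S. Psi (E i) (f i))"
  unfolding psi_def by (rule sum.mono_neutral_left) (use assms in \<open>auto simp: Psi_zero\<close>)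

end

context modS
begin

lemma fix_pow: "T x = x \<Longrightarrow> (T ^^ k) x = x"
  by (induction k) auto

lemma fix_nmul_p: "T x = x \<Longrightarrow> nmul p x = 0"
  using sumT_zero[of x] by (simp add: fix_pow nmul_def)

lemma zmul_mod: assumes "nmul p x = 0" shows "zmul k x = zmul (k mod int p) x"
proof -
  have "k = k div int p * int p + k mod int p" by simp
  then have "zmul k x = zmul (k div int p * int p) x + zmul (k mod int p) x" by (metis zmul_add)
  also have "zmul (k div int p * int p) x = 0" by (simp add: zmul_mult assms)
  finally show ?thesis by simp
qed

lemma basis_zero:
  assumes B: "is_Zp_basis_of_fix p T I e"
    and c: "\<forall>i. c i < p" "\<forall>i. c i \<noteq> 0 \<longrightarrow> i \<in> I" "finite {i. c i \<noteq> 0}"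
       "(\<Sum>i\<in>{i. c i \<noteq> 0}. nmul (c i) (e i)) = 0"
  shows "c = (\<lambda>_. 0)"
proof -
  define P where "P = (\<lambda>c :: _ \<Rightarrow> nat. (\<forall>i. c i < p) \<and> (\<forall>i. c i \<noteq> 0 \<longrightarrow> i \<in> I) \<and> finite {i. c i \<noteq> 0}
            \<and> (0::'a) = (\<Sum>i\<in>{i. c i \<noteq> 0}. nmul (c i) (e i)))"
  have "\<forall>x. T x = x \<longrightarrow> (\<exists>!c :: _ \<Rightarrow> nat. (\<forall>i. c i < p) \<and> (\<forall>i. c i \<noteq> 0 \<longrightarrow> i \<in> I) \<and> finite {i. c i \<noteq> 0}
            \<and> x = (\<Sum>i\<in>{i. c i \<noteq> 0}. nmul (c i) (e i)))"
    using B unfolding is_Zp_basis_of_fix_def by blast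
  from this[rule_format, OF T_0] have ex: "\<exists>!c. P c" unfolding P_def .
  have P0: "P (\<lambda>_. 0)" unfolding P_def using p2 by simp
  have Pc: "P c" unfolding P_def using c by simp
  from ex obtain c0 where "\<And>y. P y \<Longrightarrow> y = c0" by (elim ex1E) blast
  then show ?thesis using P0 Pc by blast
qed

lemma B_lemma:
  assumes B: "is_Zp_basis_of_fix p T I e"
    and S: "finite S" "S \<subseteq> I" and b: "\<forall>i\<in>S. b i \<in> R"
    and sum0: "(\<Sum>i\<in>S. Act (b i) (e i)) = 0"
  shows "\<forall>i\<in>S. \<exists>r\<in>R. b i = om * r"
proof -
  have fixe: "T (e i) = e i" if "i \<in> S" for i using B S that unfolding is_Zp_basis_of_fix_def by blast
  have "\<forall>i\<in>S. \<exists>nr. snd nr \<in> R \<and> b i = of_int (fst nr) + om * snd nr"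
    using b R_decomp by fastforce
  then obtain f where f: "\<forall>i\<in>S. snd (f i) \<in> R \<and> b i = of_int (fst (f i)) + om * snd (f i)"
    by (rule bchoice[THEN exE]) blast
  define n where "n i = fst (f i)" for i
  define r where "r i = snd (f i)" for i
  have nr: "r i \<in> R" "b i = of_int (n i) + om * r i" if "i \<in> S" for i
    using f that unfolding n_def r_def by auto
  define c where "c i = (if i \<in> S then nat (n i mod int p) else 0)" for i
  have Actb: "Act (b i) (e i) = nmul (c i) (e i)" if i: "i \<in> S" for i
  proof -
    have bi: "b i = of_int (n i) + r i * om" using nr[OF i] by (simp add: mult.commute)
    have "Act (b i) (e i) = zmul (n i) (e i) + Act (r i) (Act om (e i))"
      unfolding bi using nr(1)[OF i] by (simp add: Act_add Act_mult Act_of_int R_mult)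
    also have "Act om (e i) = 0" using fixe[OF i] by (simp add: Act_om)
    also have "zmul (n i) (e i) = zmul (n i mod int p) (e i)"
      by (rule zmul_mod) (rule fix_nmul_p[OF fixe[OF i]])
    also have "\<dots> = nmul (c i) (e i)"
    proof -
      have "0 \<le> n i mod int p" using p2 by simp
      then have "int (c i) = n i mod int p" using i unfolding c_def by simp
      then have "zmul (n i mod int p) (e i) = zmul (int (c i)) (e i)" by simp
      then show ?thesis by (simp only: zmul_int)
    qed
    finally show ?thesis using nr[OF i] by (simp add: Act_zero_x)
  qed
  have csub: "{i. c i \<noteq> 0} \<subseteq> S" unfolding c_def by auto
  have "(\<Sum>i\<in>{i. c i \<noteq> 0}. nmul (c i) (e i)) = (\<Sum>i\<in>S. nmul (c i) (e i))"
    by (rule sum.mono_neutral_left) (use S csub in auto)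
  also have "\<dots> = (\<Sum>i\<in>S. Act (b i) (e i))" by (rule sum.cong) (simp_all add: Actb)
  also have "\<dots> = 0" by (rule sum0)
  finally have csum: "(\<Sum>i\<in>{i. c i \<noteq> 0}. nmul (c i) (e i)) = 0" .
  have clt: "\<forall>i. c i < p"
  proof
    fix i
    have "n i mod int p < int p" using p2 by simp
    then show "c i < p" unfolding c_def using p2 by (auto simp: nat_less_iff)
  qed
  have "c = (\<lambda>_. 0)"
    by (rule basis_zero[OF B clt]) (use csub S csum in \<open>auto intro: finite_subset\<close>)
  show ?thesis
  proof
    fix i assume i: "i \<in> S"
    have "nat (n i mod int p) = 0" using \<open>c = (\<lambda>_. 0)\<close> i unfolding c_def by (metis (mono_tags))
    moreover have "0 \<le> n i mod int p" using p2 by simp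
    ultimately have "n i mod int p = 0" by simp
    then have "int p dvd n i" by (simp add: dvd_eq_mod_eq_0)
    then obtain k where k: "n i = int p * k" by (elim dvdE)
    obtain r0 where r0: "r0 \<in> R" "of_nat p = om * r0" by (rule p_omR)
    have "b i = om * (r0 * of_int k + r i)" using nr[OF i] k r0(2)
      by (simp add: algebra_simps)
    moreover have "r0 * of_int k + r i \<in> R" using r0(1) nr(1)[OF i] by auto
    ultimately show "\<exists>r\<in>R. b i = om * r" by blast
  qed
qed

end

context modS
begin

lemma L_lemma:
  assumes B: "is_Zp_basis_of_fix p T I e" and S: "finite S" "S \<subseteq> I"
  shows "\<forall>A. (\<forall>i\<in>S. A i \<in> R) \<longrightarrow> (\<Sum>i\<in>S. Act (A i) (chain (e i) N)) = 0
           \<longrightarrow> (\<forall>i\<in>S. \<exists>r\<in>R. A i = om ^ Suc N * r)"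
proof (induction N)
  case 0
  show ?case using B_lemma[OF B S] by simp
next
  case (Suc N)
  show ?case
  proof (intro allI impI)
    fix A assume AR: "\<forall>i\<in>S. A i \<in> R" and s0: "(\<Sum>i\<in>S. Act (A i) (chain (e i) (Suc N))) = 0"
    have "(\<Sum>i\<in>S. Act (A i) (chain (e i) N)) = (\<Sum>i\<in>S. Act om (Act (A i) (chain (e i) (Suc N))))"
      by (rule sum.cong) (use AR in \<open>simp_all add: Act_comm chain_step\<close>)
    also have "\<dots> = Act om (\<Sum>i\<in>S. Act (A i) (chain (e i) (Suc N)))" by (simp add: Act_sum_x)
    also have "\<dots> = 0" by (simp add: s0 Act_zero_x)
    finally have "\<forall>i\<in>S. \<exists>r. r \<in> R \<and> A i = om ^ Suc N * r" using Suc.IH AR by blast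
    then obtain r where r: "\<forall>i\<in>S. r i \<in> R \<and> A i = om ^ Suc N * r i"
      using bchoice[of S "\<lambda>i r. r \<in> R \<and> A i = om ^ Suc N * r"] by blast
    have "Act (A i) (chain (e i) (Suc N)) = Act (r i) (e i)" if i: "i \<in> S" for i
    proof -
      have Ai: "A i = r i * om ^ Suc N" using r i by (simp add: mult.commute)
      have "Act (A i) (chain (e i) (Suc N)) = Act (r i) (Act (om ^ Suc N) (chain (e i) (0 + Suc N)))"
        unfolding Ai add_0 by (intro Act_mult) (use r i in auto)
      also have "\<dots> = Act (r i) (e i)" by (simp only: chain_pow chain_0)
      finally show ?thesis .
    qed
    then have "(\<Sum>i\<in>S. Act (r i) (e i)) = 0" using s0 by (metis (no_types, lifting) sum.cong)
    then have "\<forall>i\<in>S. \<exists>s\<in>R. r i = om * s" using B_lemma[OF B S] r by blast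
    then show "\<forall>i\<in>S. \<exists>s\<in>R. A i = om ^ Suc (Suc N) * s"
      using r by (metis mult.assoc power_Suc2)
  qed
qed


lemma D_iff: "f \<in> dsum_rep p J \<longleftrightarrow> finite {i. f i \<noteq> 0} \<and> (\<forall>i. f i \<noteq> 0 \<longrightarrow> i \<in> J) \<and> (\<forall>i. f i \<in> RP)"
  by (simp add: dsum_rep_def)

lemma D_zero: "(\<lambda>i. 0) \<in> dsum_rep p J"
  unfolding D_iff using RP_R[OF R_0] by simp

lemma D_add:
  assumes "f \<in> dsum_rep p J" "g \<in> dsum_rep p J" shows "(\<lambda>i. f i + g i) \<in> dsum_rep p J"
proof -
  have sub: "{i. f i + g i \<noteq> 0} \<subseteq> {i. f i \<noteq> 0} \<union> {i. g i \<noteq> 0}" by auto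
  show ?thesis using assms sub unfolding D_iff by (auto intro: RP_add finite_subset)
qed

lemma D_scal: "c \<in> RP \<Longrightarrow> f \<in> dsum_rep p J \<Longrightarrow> (\<lambda>i. c * f i) \<in> dsum_rep p J"
  unfolding D_iff
  by (auto intro: RP_mult finite_subset[of _ "{i. f i \<noteq> 0}"])

lemma psi_add:
  assumes "f \<in> dsum_rep p J" "g \<in> dsum_rep p J"
  shows "psi E (\<lambda>i. f i + g i) = psi E f + psi E g"
proof -
  let ?S = "{i. f i \<noteq> 0} \<union> {i. g i \<noteq> 0}"
  have fin: "finite ?S" using assms unfolding D_iff by auto
  have "psi E (\<lambda>i. f i + g i) = (\<Sum>i\<in>?S. Psi (E i) (f i + g i))"
    by (rule psi_sup[OF fin]) auto
  also have "\<dots> = (\<Sum>i\<in>?S. Psi (E i) (f i) + Psi (E i) (g i))"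
    by (rule sum.cong) (use assms in \<open>auto simp: D_iff Psi_add\<close>)
  also have "\<dots> = psi E f + psi E g"
    by (simp add: sum.distrib psi_sup[OF fin])
  finally show ?thesis .
qed

lemma psi_scal:
  assumes "c \<in> R" "f \<in> dsum_rep p J"
  shows "psi E (\<lambda>i. c * f i) = Act c (psi E f)"
proof -
  let ?S = "{i. f i \<noteq> 0}"
  have fin: "finite ?S" using assms unfolding D_iff by auto
  have "psi E (\<lambda>i. c * f i) = (\<Sum>i\<in>?S. Psi (E i) (c * f i))"
    by (rule psi_sup[OF fin]) auto
  also have "\<dots> = (\<Sum>i\<in>?S. Act c (Psi (E i) (f i)))"
    by (rule sum.cong) (use assms in \<open>auto simp: D_iff Psi_scal\<close>)
  also have "\<dots> = Act c (psi E f)"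
    using assms(1) by (simp add: Act_sum_x psi_def)
  finally show ?thesis .
qed

lemma psi_zero: "psi E (\<lambda>i. 0) = 0" by (simp add: psi_def)

end

context modS
begin

lemma kernel_if:
  assumes B: "is_Zp_basis_of_fix p T I e" and f: "f \<in> dsum_rep p I"
    and om: "\<forall>i. f i \<in> one_minus_theta_Ztheta p"
  shows "psi e f = 0"
proof -
  have "Psi (e i) (f i) = 0" if i: "f i \<noteq> 0" for i
  proof -
    have iI: "i \<in> I" using f i unfolding D_iff by auto
    have fixe: "T (e i) = e i" using B iI unfolding is_Zp_basis_of_fix_def by blast
    obtain z where z: "z \<in> R" "f i = om * z" using om unfolding one_minus_theta_Ztheta_def by blast
    have zR: "z * om \<in> R" using z(1) by auto
    have "Psi (e i) (f i) = Act (z * om) (e i)" using Psi_R[OF zR] z(2) by (simp add: mult.commute)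
    also have "\<dots> = Act z (Act om (e i))" using z by (simp add: Act_mult)
    also have "\<dots> = 0" using fixe z by (simp add: Act_om Act_zero_x)
    finally show ?thesis .
  qed
  then show ?thesis unfolding psi_def by simp
qed

lemma kernel_only_if:
  assumes B: "is_Zp_basis_of_fix p T I e" and f: "f \<in> dsum_rep p I"
    and z: "psi e f = 0"
  shows "\<forall>i. f i \<in> one_minus_theta_Ztheta p"
proof -
  define S where "S = {i. f i \<noteq> 0}"
  have S: "finite S" "S \<subseteq> I" using f unfolding D_iff S_def by auto
  have "\<forall>i\<in>S. \<exists>an. fst an \<in> R \<and> f i = fst an / om ^ snd an"
    using f unfolding D_iff RP_iff by auto
  then obtain g where g: "\<forall>i\<in>S. fst (g i) \<in> R \<and> f i = fst (g i) / om ^ snd (g i)"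
    using bchoice[of S "\<lambda>i an. fst an \<in> R \<and> f i = fst an / om ^ snd an"] by blast
  define N where "N = (\<Sum>i\<in>S. snd (g i))"
  define A where "A i = fst (g i) * om ^ (N - snd (g i))" for i
  have AR: "\<forall>i\<in>S. A i \<in> R" using g unfolding A_def by (auto intro!: R_mult R_pow)
  have fA: "f i = A i / om ^ N" if i: "i \<in> S" for i
  proof -
    have le: "snd (g i) \<le> N" unfolding N_def by (rule member_le_sum[OF i _ S(1)]) auto
    have "om ^ N = om ^ snd (g i) * om ^ (N - snd (g i))" using le by (simp flip: power_add)
    then show ?thesis using g i om_nz unfolding A_def by (simp add: field_simps)
  qed
  have "(\<Sum>i\<in>S. Act (A i) (chain (e i) N)) = (\<Sum>i\<in>S. Psi (e i) (f i))"
    by (rule sum.cong) (use AR fA in \<open>auto simp: Psi_eq\<close>)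
  also have "\<dots> = 0" using z unfolding psi_def S_def .
  finally have "\<forall>i\<in>S. \<exists>r\<in>R. A i = om ^ Suc N * r" using L_lemma[OF B S] AR by blast
  show ?thesis
  proof
    fix i
    show "f i \<in> one_minus_theta_Ztheta p"
    proof (cases "i \<in> S")
      case True
      then obtain r where r: "r \<in> R" "A i = om ^ Suc N * r"
        using \<open>\<forall>i\<in>S. \<exists>r\<in>R. A i = om ^ Suc N * r\<close> by blast
      have "f i = om * r" using fA[OF True] r(2) om_nz by simp
      then show ?thesis unfolding one_minus_theta_Ztheta_def using r(1) by blast
    next
      case False
      then have "f i = om * 0" unfolding S_def by simp
      then show ?thesis unfolding one_minus_theta_Ztheta_def using R_0 by blast
    qed
  qed
qed

lemma K_lemma:
  assumes B: "is_Zp_basis_of_fix p T I e"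
  shows "\<forall>z. Act (om ^ k) z = 0 \<longrightarrow> z \<in> psi e ` dsum_rep p I"
proof (induction k)
  case 0
  show ?case
  proof (intro allI impI)
    fix z assume "Act (om ^ 0) z = 0"
    then have "z = psi e (\<lambda>i. 0)" by (simp add: Act_1 psi_zero)
    then show "z \<in> psi e ` dsum_rep p I" using D_zero by blast
  qed
next
  case (Suc k)
  show ?case
  proof (intro allI impI)
    fix z assume z0: "Act (om ^ Suc k) z = 0"
    have ps: "om ^ Suc k = om ^ k * om" by (rule power_Suc2)
    have "Act (om ^ Suc k) z = Act (om ^ k) (Act om z)" unfolding ps by (rule Act_mult) auto
    then have "Act (om ^ k) (Act om z) = 0" using z0 by simp
    then have "Act om z \<in> psi e ` dsum_rep p I" using Suc.IH by blast
    then obtain f where f: "f \<in> dsum_rep p I" "Act om z = psi e f" by blast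
    define g where "g = (\<lambda>i. (1 / om) * f i)"
    have gD: "g \<in> dsum_rep p I" unfolding g_def by (rule D_scal[OF RP_inv_om f(1)])
    have "(\<lambda>i. om * g i) = f" unfolding g_def using om_nz by auto
    then have "psi e f = Act om (psi e g)" using psi_scal[OF R_om gD] by simp
    then have "Act om (z - psi e g) = 0" using f(2) by (simp add: Act_diff_x)
    then have Tw: "T (z - psi e g) = z - psi e g" by (simp add: Act_om)
    obtain c where c: "\<forall>i. c i < p" "\<forall>i. c i \<noteq> 0 \<longrightarrow> i \<in> I" "finite {i. c i \<noteq> 0}"
        "z - psi e g = (\<Sum>i\<in>{i. c i \<noteq> 0}. nmul (c i) (e i))"
      using B Tw unfolding is_Zp_basis_of_fix_def by metis
    define h where "h = (\<lambda>i. (of_nat (c i) :: complex))"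
    have supp: "{i. h i \<noteq> 0} = {i. c i \<noteq> 0}" unfolding h_def by simp
    have hD: "h \<in> dsum_rep p I" unfolding D_iff supp using c(2,3)
      by (auto simp: h_def intro: RP_R)
    have "psi e h = (\<Sum>i\<in>{i. c i \<noteq> 0}. Psi (e i) (h i))" unfolding psi_def supp ..
    also have "\<dots> = (\<Sum>i\<in>{i. c i \<noteq> 0}. nmul (c i) (e i))"
      by (rule sum.cong) (simp_all add: h_def Psi_R Act_of_nat)
    finally have "z = psi e h + psi e g" using c(4) by (simp add: algebra_simps)
    also have "\<dots> = psi e (\<lambda>i. h i + g i)" by (rule psi_add[OF hD gD, symmetric])
    finally show "z \<in> psi e ` dsum_rep p I" using D_add[OF hD gD] by blast
  qed
qed

lemma main:
  assumes B: "is_Zp_basis_of_fix p T I e"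
  shows "\<exists>\<psi> :: ('i \<Rightarrow> complex) \<Rightarrow> 'a.
               (\<forall>f\<in>dsum_rep p I. \<forall>g\<in>dsum_rep p I. \<psi> (\<lambda>i. f i + g i) = \<psi> f + \<psi> g)
             \<and> (\<forall>f\<in>dsum_rep p I. \<psi> (\<lambda>i. theta p * f i) = T (\<psi> f))
             \<and> (\<forall>f\<in>dsum_rep p I. \<psi> f = 0 \<longleftrightarrow> (\<forall>i. f i \<in> one_minus_theta_Ztheta p))
             \<and> uniquely_p_divisible_cokernel p (\<psi> ` dsum_rep p I)"
proof (intro exI[of _ "psi e"] conjI ballI)
  fix f g assume "f \<in> dsum_rep p I" "g \<in> dsum_rep p I"
  then show "psi e (\<lambda>i. f i + g i) = psi e f + psi e g" by (rule psi_add)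
next
  fix f assume "f \<in> dsum_rep p I"
  then show "psi e (\<lambda>i. theta p * f i) = T (psi e f)" using psi_scal[OF R_theta] by (simp add: Act_th)
next
  fix f assume f: "f \<in> dsum_rep p I"
  show "psi e f = 0 \<longleftrightarrow> (\<forall>i. f i \<in> one_minus_theta_Ztheta p)"
    using kernel_if[OF B f] kernel_only_if[OF B f] by blast
next
  obtain W where W: "W \<in> R" "om ^ (p - 1) = of_nat p * W" by (rule W_fact)
  show "uniquely_p_divisible_cokernel p (psi e ` dsum_rep p I)"
    unfolding uniquely_p_divisible_cokernel_def
  proof (intro conjI allI impI)
    fix x
    obtain z where z: "Act (om ^ (p - 1)) z = x" using Act_om_pow_surj by blast
    have "nmul p (Act W z) = x" using z W by (simp add: Act_of_nat[symmetric] Act_mult[symmetric])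
    then have "nmul p (Act W z) - x = psi e (\<lambda>i. 0)" by (simp add: psi_zero)
    then show "\<exists>y. nmul p y - x \<in> psi e ` dsum_rep p I" using D_zero by blast
  next
    fix y assume "nmul p y \<in> psi e ` dsum_rep p I"
    then obtain f where f: "f \<in> dsum_rep p I" "nmul p y = psi e f" by blast
    define g where "g = (\<lambda>i. (1 / of_nat p) * f i)"
    have gD: "g \<in> dsum_rep p I" unfolding g_def by (rule D_scal[OF RP_inv_p f(1)])
    have "(\<lambda>i. of_nat p * g i) = f" unfolding g_def using p_nz by auto
    then have "psi e f = nmul p (psi e g)" using psi_scal[OF R_of_nat[of p p] gD] by (simp add: Act_of_nat)
    then have n0: "nmul p (y - psi e g) = 0" using f(2) by (simp add: nmul_diff_x)
    have "Act (om ^ (p - 1)) (y - psi e g) = Act W (Act (of_nat p) (y - psi e g))"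
      using W by (simp add: Act_mult[symmetric] mult.commute)
    also have "\<dots> = 0" using n0 W by (simp add: Act_of_nat Act_zero_x)
    finally have "y - psi e g \<in> psi e ` dsum_rep p I" using K_lemma[OF B] by blast
    then obtain h where h: "h \<in> dsum_rep p I" "y - psi e g = psi e h" by blast
    have "y = psi e (\<lambda>i. h i + g i)" using h(2) psi_add[OF h(1) gD] by (simp add: algebra_simps)
    then show "y \<in> psi e ` dsum_rep p I" using D_add[OF h(1) gD] by blast
  qed
qed

end

theorem lemma6p8:
  fixes p :: nat and T :: "'a::ab_group_add \<Rightarrow> 'a"
  assumes "prime p"
    and "S_module p T"
    and "surj (\<lambda>x. x - T x)"
  shows "(\<forall>x. (\<Sum>k<p. (T ^^ k) x) = 0)
       \<and> (\<forall>x. T x = x \<longrightarrow> nmul p x = 0)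
       \<and> (\<forall>(I :: 'i set) (e :: 'i \<Rightarrow> 'a). is_Zp_basis_of_fix p T I e \<longrightarrow>
            (\<exists>\<psi> :: ('i \<Rightarrow> complex) \<Rightarrow> 'a.
               (\<forall>f\<in>dsum_rep p I. \<forall>g\<in>dsum_rep p I. \<psi> (\<lambda>i. f i + g i) = \<psi> f + \<psi> g)
             \<and> (\<forall>f\<in>dsum_rep p I. \<psi> (\<lambda>i. theta p * f i) = T (\<psi> f))
             \<and> (\<forall>f\<in>dsum_rep p I. \<psi> f = 0 \<longleftrightarrow> (\<forall>i. f i \<in> one_minus_theta_Ztheta p))
             \<and> uniquely_p_divisible_cokernel p (\<psi> ` dsum_rep p I)))"
proof -
  interpret modS p T using assms by unfold_locales
  show ?thesis using sumT_zero fix_nmul_p main by blast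
qed


end
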